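(* Let $I\subset\mathbb{K}[S_M]$ be an ideal and $G$ a sparse Gröbner basis of $I$ with respect to $\prec$. Then $\chi^{-1}(G)=\{\chi^{-1}(g):g\in G\}$ is a sparse Gröbner basis, with respect to $\prec_h$, of the ideal $\chi^{-1}(I)\subset\mathbb{K}[S_M^h]$ generated by the homogenizations of all elements of $I$.
   Context: Let $\mathbb{K}$ be a field of characteristic $0$, $M\subset\mathbb{R}^n$ a polytope with $0\in M$, $S_M\subset\mathbb{Z}^n$ the affine semigroup generated by $M\cap\mathbb{Z}^n$ and $S_M^h\subset\mathbb{Z}^{n+1}$ the one generated by $\{(s,1):s\in M\cap\mathbb{Z}^n\}$, both assumed pointed. $\mathbb{K}[S]$ is the semigroup algebra with monomials $X^s$, $X^sX^t=X^{s+t}$; $\mathbb{K}[S_M^h]$ is graded by $\deg X^{(s,d)}=d$. $\chi:\mathbb{K}[S_M^h]\to\mathbb{K}[S_M]$, $X^{(s,d)}\mapsto X^s$. The affine degree $\delta^A(X^s)$ is the least $d$ with $(s,d)\in S_M^h$, extended to polynomials by the maximum over the support; the homogenization of $f=\sum c_sX^s$ is $\chi^{-1}(f)=\sum c_sX^{(s,\delta^A(f))}$; the sparse degree of $f\in\mathbb{K}[S_M^h]$ is $\delta(f)=\delta^A(\chi(f))$. Fix a monomial order $<_M$ on $\mathbb{K}[S_M]$; the sparse order is $X^s\prec X^r$ iff $\delta^A(X^s)<\delta^A(X^r)$, or equality and $X^s<_MX^r$; the graded sparse order is $X^{(s,d)}\prec_hX^{(r,d')}$ iff $d<d'$, or $d=d'$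 and $X^s\prec X^r$. Divisibility: $X^{(s,d_s)}\mid_\delta X^{(r,d_r)}$ if some monomial $X^{(t,d_t)}$ satisfies $X^{(s,d_s)}X^{(t,d_t)}=X^{(r,d_r)}$ and $\delta(X^{(s,d_s)})+\delta(X^{(t,d_t)})=\delta(X^{(r,d_r)})$; for monomials of $\mathbb{K}[S_M]$, $X^s\mid_\delta X^r$ iff $\chi^{-1}(X^s)\mid_\delta\chi^{-1}(X^r)$. A sparse Gröbner basis of an ideal (of $\mathbb{K}[S_M]$ w.r.t. $\prec$, resp. of $\mathbb{K}[S_M^h]$ w.r.t. $\prec_h$) is a subset of the ideal generating it such that every nonzero element $f$ of the ideal has some element $g$ of the subset with $\mathrm{LM}(g)\mid_\delta\mathrm{LM}(f)$. *)

theory Defs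
  imports "HOL-Analysis.Analysis" "HOL-Library.Poly_Mapping" "HOL-Library.Product_Plus"
begin

(* Elements of the semigroup algebra K[S] are finitely supported functions
   S -> K, i.e. poly_mappings whose keys lie in S; X^s = Poly_Mapping.single s 1
   and the product is the convolution product of poly_mapping. *)

inductive_set monoid_gen :: "'a::monoid_add set \<Rightarrow> 'a set" for X where
  zero: "0 \<in> monoid_gen X"
| gen: "x \<in> X \<Longrightarrow> x \<in> monoid_gen X"
| add: "a \<in> monoid_gen X \<Longrightarrow> b \<in> monoid_gen X \<Longrightarrow> a + b \<in> monoid_gen X"

definition pointed :: "'a::ab_group_add set \<Rightarrow> bool" where
  "pointed S \<longleftrightarrow> (\<forall>s\<in>S. - s \<in> S \<longrightarrow> s = 0)"

definition latt :: "(real^'n) set \<Rightarrow> (int^'n) set" where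
  "latt M = {s. (\<chi> i. real_of_int (s $ i)) \<in> M}"

definition SM :: "(real^'n) set \<Rightarrow> (int^'n) set" where
  "SM M = monoid_gen (latt M)"

definition SMh :: "(real^'n) set \<Rightarrow> ((int^'n) \<times> int) set" where
  "SMh M = monoid_gen ((\<lambda>s. (s, 1)) ` latt M)"

definition alg :: "'e set \<Rightarrow> ('e \<Rightarrow>\<^sub>0 'k::zero) set" where
  "alg S = {p. Poly_Mapping.keys p \<subseteq> S}"

definition ideal_in :: "('e::monoid_add \<Rightarrow>\<^sub>0 'k::field) set \<Rightarrow> ('e \<Rightarrow>\<^sub>0 'k) set \<Rightarrow> bool" where
  "ideal_in A J \<longleftrightarrow> J \<subseteq> A \<and> 0 \<in> J \<and> (\<forall>a\<in>J. \<forall>b\<in>J. a + b \<in> J)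
      \<and> (\<forall>r\<in>A. \<forall>a\<in>J. r * a \<in> J)"

definition gen_ideal :: "('e::monoid_add \<Rightarrow>\<^sub>0 'k::field) set \<Rightarrow> ('e \<Rightarrow>\<^sub>0 'k) set \<Rightarrow> ('e \<Rightarrow>\<^sub>0 'k) set" where
  "gen_ideal A X = \<Inter> {J. ideal_in A J \<and> X \<subseteq> J}"

definition deltaA :: "(real^'n) set \<Rightarrow> int^'n \<Rightarrow> nat" where
  "deltaA M s = (LEAST d::nat. (s, int d) \<in> SMh M)"

definition deltaA_poly :: "(real^'n) set \<Rightarrow> (int^'n \<Rightarrow>\<^sub>0 'k::zero) \<Rightarrow> nat" where
  "deltaA_poly M f = Max (insert 0 (deltaA M ` Poly_Mapping.keys f))"

definition homog :: "(real^'n) set \<Rightarrow> (int^'n \<Rightarrow>\<^sub>0 'k::comm_monoid_add) \<Rightarrow> ((int^'n) \<times> int \<Rightarrow>\<^sub>0 'k)" where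
  "homog M f = (\<Sum>s\<in>Poly_Mapping.keys f. Poly_Mapping.single (s, int (deltaA_poly M f)) (Poly_Mapping.lookup f s))"

definition chi :: "((int^'n) \<times> int \<Rightarrow>\<^sub>0 'k::comm_monoid_add) \<Rightarrow> (int^'n \<Rightarrow>\<^sub>0 'k)" where
  "chi F = (\<Sum>x\<in>Poly_Mapping.keys F. Poly_Mapping.single (fst x) (Poly_Mapping.lookup F x))"

definition sdeg :: "(real^'n) set \<Rightarrow> ((int^'n) \<times> int \<Rightarrow>\<^sub>0 'k::comm_monoid_add) \<Rightarrow> nat" where
  "sdeg M F = deltaA_poly M (chi F)"

definition monomial_order :: "'e::monoid_add set \<Rightarrow> ('e \<Rightarrow> 'e \<Rightarrow> bool) \<Rightarrow> bool" where
  "monomial_order S ord \<longleftrightarrow>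
     (\<forall>s\<in>S. \<not> ord s s)
   \<and> (\<forall>s\<in>S. \<forall>t\<in>S. \<forall>u\<in>S. ord s t \<longrightarrow> ord t u \<longrightarrow> ord s u)
   \<and> (\<forall>s\<in>S. \<forall>t\<in>S. s \<noteq> t \<longrightarrow> ord s t \<or> ord t s)
   \<and> (\<forall>s\<in>S. \<forall>t\<in>S. \<forall>u\<in>S. ord s t \<longrightarrow> ord (s + u) (t + u))
   \<and> (\<forall>s\<in>S. s \<noteq> 0 \<longrightarrow> ord 0 s)"

definition sparse_less :: "(real^'n) set \<Rightarrow> (int^'n \<Rightarrow> int^'n \<Rightarrow> bool) \<Rightarrow> int^'n \<Rightarrow> int^'n \<Rightarrow> bool" where
  "sparse_less M ord s r \<longleftrightarrow> deltaA M s < deltaA M r \<or> (deltaA M s = deltaA M r \<and> ord s r)"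

definition gsparse_less :: "(real^'n) set \<Rightarrow> (int^'n \<Rightarrow> int^'n \<Rightarrow> bool)
    \<Rightarrow> (int^'n) \<times> int \<Rightarrow> (int^'n) \<times> int \<Rightarrow> bool" where
  "gsparse_less M ord a b \<longleftrightarrow> snd a < snd b \<or> (snd a = snd b \<and> sparse_less M ord (fst a) (fst b))"

definition LM :: "('e \<Rightarrow> 'e \<Rightarrow> bool) \<Rightarrow> ('e \<Rightarrow>\<^sub>0 'k::zero) \<Rightarrow> 'e" where
  "LM lt p = (THE m. m \<in> Poly_Mapping.keys p \<and> (\<forall>m'\<in>Poly_Mapping.keys p. m' \<noteq> m \<longrightarrow> lt m' m))"

(* sparse divisibility on monomials of K[S_M^h];
   delta(X^(s,d)) = deltaA(chi(X^(s,d))) = deltaA(X^s) *)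
definition sdvd_h :: "(real^'n) set \<Rightarrow> (int^'n) \<times> int \<Rightarrow> (int^'n) \<times> int \<Rightarrow> bool" where
  "sdvd_h M a b \<longleftrightarrow> (\<exists>t\<in>SMh M. a + t = b
       \<and> sdeg M (Poly_Mapping.single a (1::real)) + sdeg M (Poly_Mapping.single t (1::real))
           = sdeg M (Poly_Mapping.single b (1::real)))"

definition sdvd :: "(real^'n) set \<Rightarrow> int^'n \<Rightarrow> int^'n \<Rightarrow> bool" where
  "sdvd M s r \<longleftrightarrow> sdvd_h M (s, int (deltaA M s)) (r, int (deltaA M r))"

definition sparse_GB ::
  "('e::monoid_add \<Rightarrow>\<^sub>0 'k::field) set \<Rightarrow> ('e \<Rightarrow> 'e \<Rightarrow> bool) \<Rightarrow> ('e \<Rightarrow> 'e \<Rightarrow> bool)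
     \<Rightarrow> ('e \<Rightarrow>\<^sub>0 'k) set \<Rightarrow> ('e \<Rightarrow>\<^sub>0 'k) set \<Rightarrow> bool" where
  "sparse_GB A lt dv J G \<longleftrightarrow> G \<subseteq> J \<and> gen_ideal A G = J
     \<and> (\<forall>f\<in>J. f \<noteq> 0 \<longrightarrow> (\<exists>g\<in>G. g \<noteq> 0 \<and> dv (LM lt g) (LM lt f)))"

end

theory Submission
  imports Defs
begin

lemma SMh_fst: "x \<in> SMh M \<Longrightarrow> fst x \<in> SM M"
  unfolding SMh_def SM_def
  by (induction rule: monoid_gen.induct) (auto intro: monoid_gen.intros)

lemma SMh_list: "x \<in> SMh M \<Longrightarrow> \<exists>ys. set ys \<subseteq> latt M \<and> x = (sum_list ys, int (length ys))"
  unfolding SMh_def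
proof (induction rule: monoid_gen.induct)
  case zero
  then show ?case by (intro exI[of _ "[]"]) (simp add: zero_prod_def)
next
  case (gen x)
  then obtain s where "s \<in> latt M" "x = (s,1)" by blast
  then show ?case by (intro exI[of _ "[s]"]) auto
next
  case (add a b)
  then obtain ys zs where "set ys \<subseteq> latt M" "a = (sum_list ys, int (length ys))"
    "set zs \<subseteq> latt M" "b = (sum_list zs, int (length zs))" by blast
  then show ?case by (intro exI[of _ "ys @ zs"]) auto
qed

lemma SM_to_SMh: "s \<in> SM M \<Longrightarrow> \<exists>d::nat. (s, int d) \<in> SMh M"
  unfolding SM_def
proof (induction rule: monoid_gen.induct)
  case zero
  then show ?case unfolding SMh_def by (intro exI[of _ 0]) (metis monoid_gen.zero of_nat_0 zero_prod_def)
next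
  case (gen x)
  then show ?case unfolding SMh_def by (intro exI[of _ 1]) (auto intro: monoid_gen.gen)
next
  case (add a b)
  then obtain d e where "(a, int d) \<in> SMh M" "(b, int e) \<in> SMh M" by blast
  then have "(a, int d) + (b, int e) \<in> SMh M" unfolding SMh_def by (rule monoid_gen.add)
  then show ?case by (intro exI[of _ "d+e"]) simp
qed

lemma SMh_add: "a \<in> SMh M \<Longrightarrow> b \<in> SMh M \<Longrightarrow> a + b \<in> SMh M"
  unfolding SMh_def by (rule monoid_gen.add)

lemma SM_add: "a \<in> SM M \<Longrightarrow> b \<in> SM M \<Longrightarrow> a + b \<in> SM M"
  unfolding SM_def by (rule monoid_gen.add)

lemma SM_zero: "0 \<in> SM M"
  unfolding SM_def by (rule monoid_gen.zero)

lemma deltaA_mem: "s \<in> SM M \<Longrightarrow> (s, int (deltaA M s)) \<in> SMh M"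
  unfolding deltaA_def by (rule LeastI_ex) (rule SM_to_SMh)

lemma deltaA_le: "(s, int d) \<in> SMh M \<Longrightarrow> deltaA M s \<le> d"
  unfolding deltaA_def by (rule Least_le)

lemma SMh_snd_nonneg: "x \<in> SMh M \<Longrightarrow> snd x \<ge> 0"
  using SMh_list by fastforce

lemma SMh_deltaA: "(s,e) \<in> SMh M \<Longrightarrow> int (deltaA M s) \<le> e"
proof -
  assume a: "(s,e) \<in> SMh M"
  then have "e \<ge> 0" using SMh_snd_nonneg by fastforce
  then have "(s, int (nat e)) \<in> SMh M" using a by simp
  then have "deltaA M s \<le> nat e" by (rule deltaA_le)
  then show ?thesis using \<open>e \<ge> 0\<close> by linarith
qed

lemma zero_latt: fixes M :: "(real^'n) set" shows "0 \<in> M \<Longrightarrow> 0 \<in> latt M"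
proof -
  assume "0 \<in> M"
  moreover have "(\<chi> i. (0::real)) = (0::real^'n)" by (simp add: vec_eq_iff)
  ultimately show "0 \<in> latt M" unfolding latt_def by simp
qed

lemma SMh_zero_k: "0 \<in> M \<Longrightarrow> (0, int k) \<in> SMh M"
proof (induction k)
  case 0
  then show ?case unfolding SMh_def by (metis monoid_gen.zero of_nat_0 zero_prod_def)
next
  case (Suc k)
  have "(0, 1) \<in> SMh M" unfolding SMh_def using zero_latt[OF Suc.prems] by (auto intro: monoid_gen.gen)
  from SMh_add[OF Suc.IH[OF Suc.prems] this] show ?case by (simp add: add.commute)
qed

lemma SMh_up: "0 \<in> M \<Longrightarrow> (s,e) \<in> SMh M \<Longrightarrow> e \<le> e' \<Longrightarrow> (s,e') \<in> SMh M"
proof -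
  assume a: "0 \<in> M" "(s,e) \<in> SMh M" "e \<le> e'"
  have "(s,e) + (0, int (nat (e'-e))) \<in> SMh M" by (rule SMh_add[OF a(2) SMh_zero_k[OF a(1)]])
  then show ?thesis using a(3) by simp
qed

lemma deltaA_subadd: "s \<in> SM M \<Longrightarrow> u \<in> SM M \<Longrightarrow> deltaA M (s+u) \<le> deltaA M s + deltaA M u"
proof -
  assume "s \<in> SM M" "u \<in> SM M"
  from SMh_add[OF deltaA_mem[OF this(1)] deltaA_mem[OF this(2)]]
  have "(s+u, int (deltaA M s + deltaA M u)) \<in> SMh M" by simp
  then show ?thesis by (rule deltaA_le)
qed

lemma finite_latt: fixes M :: "(real^'n) set" shows "polytope M \<Longrightarrow> finite (latt M)"
proof -
  assume "polytope M"
  then have "bounded M" using polytope_imp_compact compact_imp_bounded by blast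
  then obtain B where B: "\<forall>x\<in>M. norm x \<le> B" unfolding bounded_iff by blast
  define N where "N = \<lceil>B\<rceil>"
  have "latt M \<subseteq> vec_lambda ` (PiE UNIV (\<lambda>_. {-N..N}))"
  proof
    fix s assume "s \<in> latt M"
    then have m: "(\<chi> i. real_of_int (s $ i)) \<in> M" unfolding latt_def by simp
    have "\<bar>s $ i\<bar> \<le> N" for i
    proof -
      have "\<bar>real_of_int (s $ i)\<bar> \<le> norm (\<chi> i. real_of_int (s $ i))"
        using component_le_norm_cart[of "\<chi> i. real_of_int (s $ i)" i] by simp
      also have "\<dots> \<le> B" using B m by blast
      finally have "real_of_int \<bar>s $ i\<bar> \<le> B" by simp
      then show ?thesis unfolding N_def by linarith
    qed
    then have "(\<lambda>i. s $ i) \<in> PiE UNIV (\<lambda>_. {-N..N})" by (auto simp: abs_le_iff) (metis minus_le_iff)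
    moreover have "s = vec_lambda (\<lambda>i. s $ i)" by simp
    ultimately show "s \<in> vec_lambda ` (PiE UNIV (\<lambda>_. {-N..N}))" by blast
  qed
  moreover have "finite (PiE (UNIV::'n set) (\<lambda>_. {-N..N}))" by (rule finite_PiE) auto
  ultimately show ?thesis using finite_subset by blast
qed

lemma finite_level: "polytope M \<Longrightarrow> finite {s. \<exists>d\<le>k. (s, int d) \<in> SMh M}"
proof -
  assume p: "polytope M"
  have "{s. \<exists>d\<le>k. (s, int d) \<in> SMh M} \<subseteq> (\<Union>d\<le>k. sum_list ` {ys. set ys \<subseteq> latt M \<and> length ys = d})"
  proof
    fix s assume "s \<in> {s. \<exists>d\<le>k. (s, int d) \<in> SMh M}"
    then obtain d where "d \<le> k" "(s, int d) \<in> SMh M" by blast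
    then obtain ys where "set ys \<subseteq> latt M" "(s, int d) = (sum_list ys, int (length ys))"
      using SMh_list by blast
    then show "s \<in> (\<Union>d\<le>k. sum_list ` {ys. set ys \<subseteq> latt M \<and> length ys = d})"
      using \<open>d \<le> k\<close> by auto
  qed
  moreover have "finite (\<Union>d\<le>k. sum_list ` {ys. set ys \<subseteq> latt M \<and> length ys = d})"
    using finite_lists_length_eq[OF finite_latt[OF p]] by blast
  ultimately show ?thesis using finite_subset by blast
qed

lemma sdeg_single: "sdeg M (Poly_Mapping.single a (1::real)) = deltaA M (fst a)"
  by (simp add: sdeg_def chi_def deltaA_poly_def)

lemma lookup_single_mult:
  fixes a :: "'e::ab_group_add" and p :: "'e \<Rightarrow>\<^sub>0 'k::field"
  shows "Poly_Mapping.lookup (Poly_Mapping.single a c * p) x = c * Poly_Mapping.lookup p (x - a)"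
proof -
  have e: "(\<lambda>q. Poly_Mapping.lookup p q when x = l + q) = (\<lambda>q. Poly_Mapping.lookup p q when q = x - l)" for l
    by (rule ext) (simp add: when_def eq_diff_eq add.commute)
  have "Poly_Mapping.lookup (Poly_Mapping.single a c * p) x
      = (\<Sum>l. (c when a = l) * (\<Sum>q. Poly_Mapping.lookup p q when x = l + q))"
    unfolding lookup_mult lookup_single ..
  also have "\<dots> = (\<Sum>l. (c when a = l) * Poly_Mapping.lookup p (x - l))"
    unfolding e Sum_any_when_equal ..
  also have "\<dots> = (\<Sum>l. (c * Poly_Mapping.lookup p (x - l)) when a = l)"
    unfolding when_mult ..
  also have "\<dots> = c * Poly_Mapping.lookup p (x - a)"
    by (rule Sum_any_when_equal')
  finally show ?thesis .
qed

lemma pm_expand: "p = (\<Sum>a\<in>Poly_Mapping.keys p. Poly_Mapping.single a (Poly_Mapping.lookup p a))"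
proof (rule poly_mapping_eqI)
  fix k
  have "Poly_Mapping.lookup (\<Sum>a\<in>Poly_Mapping.keys p. Poly_Mapping.single a (Poly_Mapping.lookup p a)) k
     = (\<Sum>a\<in>Poly_Mapping.keys p. if a = k then Poly_Mapping.lookup p a else 0)"
    by (simp add: lookup_sum lookup_single when_def)
  also have "\<dots> = Poly_Mapping.lookup p k"
    by (simp add: sum.delta in_keys_iff)
  finally show "Poly_Mapping.lookup p k = Poly_Mapping.lookup (\<Sum>a\<in>Poly_Mapping.keys p. Poly_Mapping.single a (Poly_Mapping.lookup p a)) k" by simp
qed

lemma alg_add: "p \<in> alg S \<Longrightarrow> q \<in> alg S \<Longrightarrow> p + q \<in> alg S"
proof -
  assume "p \<in> alg S" "q \<in> alg S"
  then have "Poly_Mapping.keys p \<subseteq> S" "Poly_Mapping.keys q \<subseteq> S" unfolding alg_def by simp_all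
  then have "Poly_Mapping.keys (p + q) \<subseteq> S" using keys_add[of p q] by (meson le_sup_iff order_trans)
  then show ?thesis unfolding alg_def by simp
qed

lemma alg_mult:
  fixes p q :: "'e::comm_monoid_add \<Rightarrow>\<^sub>0 'k::field"
  shows "p \<in> alg (monoid_gen X) \<Longrightarrow> q \<in> alg (monoid_gen X) \<Longrightarrow> p * q \<in> alg (monoid_gen X)"
proof -
  assume "p \<in> alg (monoid_gen X)" "q \<in> alg (monoid_gen X)"
  then have a: "Poly_Mapping.keys p \<subseteq> monoid_gen X" "Poly_Mapping.keys q \<subseteq> monoid_gen X" unfolding alg_def by simp_all
  have "Poly_Mapping.keys (p * q) \<subseteq> monoid_gen X"
  proof
    fix x assume "x \<in> Poly_Mapping.keys (p * q)"
    then obtain a b where "x = a + b" "a \<in> Poly_Mapping.keys p" "b \<in> Poly_Mapping.keys q"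
      using keys_mult[of p q] by blast
    then show "x \<in> monoid_gen X" using a by (blast intro: monoid_gen.add)
  qed
  then show ?thesis unfolding alg_def by simp
qed

lemma ideal_alg:
  fixes X :: "'e::comm_monoid_add set"
  shows "ideal_in (alg (monoid_gen X)) (alg (monoid_gen X) :: ('e \<Rightarrow>\<^sub>0 'k::field) set)"
proof -
  have "0 \<in> (alg (monoid_gen X) :: ('e \<Rightarrow>\<^sub>0 'k::field) set)" unfolding alg_def by simp
  moreover have "\<forall>a\<in>(alg (monoid_gen X) :: ('e \<Rightarrow>\<^sub>0 'k::field) set). \<forall>b\<in>alg (monoid_gen X). a + b \<in> alg (monoid_gen X)"
    using alg_add by blast
  moreover have "\<forall>a\<in>(alg (monoid_gen X) :: ('e \<Rightarrow>\<^sub>0 'k::field) set). \<forall>b\<in>alg (monoid_gen X). a * b \<in> alg (monoid_gen X)"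
    using alg_mult by blast
  ultimately show ?thesis unfolding ideal_in_def by blast
qed

lemma gen_ideal_ideal: "ideal_in A A \<Longrightarrow> X \<subseteq> A \<Longrightarrow> ideal_in A (gen_ideal A X)"
proof -
  assume a: "ideal_in A A" "X \<subseteq> A"
  let ?F = "{J. ideal_in A J \<and> X \<subseteq> J}"
  have "A \<in> ?F" using a by blast
  have s: "\<Inter>?F \<subseteq> A" using \<open>A \<in> ?F\<close> by blast
  have z: "0 \<in> \<Inter>?F"
  proof (rule InterI)
    fix J assume "J \<in> ?F" then show "0 \<in> J" unfolding ideal_in_def by blast
  qed
  have p: "\<forall>x\<in>\<Inter>?F. \<forall>y\<in>\<Inter>?F. x + y \<in> \<Inter>?F"
  proof (intro ballI InterI)
    fix x y J assume "x \<in> \<Inter>?F" "y \<in> \<Inter>?F" "J \<in> ?F"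
    then have "x \<in> J" "y \<in> J" "ideal_in A J" by blast+
    then show "x + y \<in> J" unfolding ideal_in_def by blast
  qed
  have m: "\<forall>r\<in>A. \<forall>y\<in>\<Inter>?F. r * y \<in> \<Inter>?F"
  proof (intro ballI InterI)
    fix r y J assume "r \<in> A" "y \<in> \<Inter>?F" "J \<in> ?F"
    then have "y \<in> J" "ideal_in A J" by blast+
    then show "r * y \<in> J" using \<open>r \<in> A\<close> unfolding ideal_in_def by blast
  qed
  have "ideal_in A (\<Inter>?F)" unfolding ideal_in_def[of A "\<Inter>?F"] using s z p m by blast
  then show ?thesis unfolding gen_ideal_def .
qed

lemma gen_ideal_sub: "X \<subseteq> gen_ideal A X"
  unfolding gen_ideal_def by blast

lemma gen_ideal_least: "ideal_in A J \<Longrightarrow> X \<subseteq> J \<Longrightarrow> gen_ideal A X \<subseteq> J"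
  unfolding gen_ideal_def by blast

lemma ideal_sum:
  assumes "ideal_in A J" "finite S" "\<And>x. x \<in> S \<Longrightarrow> h x \<in> J"
  shows "sum h S \<in> J"
  using assms(2,3)
proof (induction S rule: finite_induct)
  case empty
  then show ?case using assms(1) unfolding ideal_in_def by simp
next
  case (insert x F)
  then show ?case using assms(1) unfolding ideal_in_def by simp
qed

lemma ideal_diff:
  fixes a b :: "'e::ab_group_add \<Rightarrow>\<^sub>0 'k::field"
  assumes "ideal_in A J" "Poly_Mapping.single 0 (-1) \<in> A" "a \<in> J" "b \<in> J"
  shows "a - b \<in> J"
proof -
  have "Poly_Mapping.single 0 (-1) * b \<in> J" using assms unfolding ideal_in_def by blast
  then have "a + Poly_Mapping.single 0 (-1) * b \<in> J" using assms unfolding ideal_in_def by blast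
  moreover have "a + Poly_Mapping.single 0 (-1) * b = a - b"
    by (rule poly_mapping_eqI) (simp add: lookup_add lookup_minus lookup_single_mult)
  ultimately show ?thesis by simp
qed

definition sord :: "'a set \<Rightarrow> ('a \<Rightarrow> 'a \<Rightarrow> bool) \<Rightarrow> bool" where
  "sord K lt \<longleftrightarrow> (\<forall>a\<in>K. \<not> lt a a) \<and> (\<forall>a\<in>K. \<forall>b\<in>K. \<forall>c\<in>K. lt a b \<longrightarrow> lt b c \<longrightarrow> lt a c)
     \<and> (\<forall>a\<in>K. \<forall>b\<in>K. a \<noteq> b \<longrightarrow> lt a b \<or> lt b a)"

lemma sord_mono: "sord K lt \<Longrightarrow> K' \<subseteq> K \<Longrightarrow> sord K' lt"
  unfolding sord_def by (meson subsetD)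

lemma sord_max: assumes "finite K" "K \<noteq> {}" "sord K lt" shows "\<exists>m\<in>K. \<forall>m'\<in>K. m' \<noteq> m \<longrightarrow> lt m' m"
  using assms proof (induction K rule: finite_ne_induct)
  case (singleton x)
  then show ?case by simp
next
  case (insert x F)
  have so: "sord F lt" using sord_mono insert.prems by blast
  then obtain m where m: "m \<in> F" "\<forall>m'\<in>F. m' \<noteq> m \<longrightarrow> lt m' m" using insert.IH[OF so] by blast
  have tr: "\<And>a b c. a \<in> insert x F \<Longrightarrow> b \<in> insert x F \<Longrightarrow> c \<in> insert x F \<Longrightarrow> lt a b \<Longrightarrow> lt b c \<Longrightarrow> lt a c"
    and to: "\<And>a b. a \<in> insert x F \<Longrightarrow> b \<in> insert x F \<Longrightarrow> a \<noteq> b \<Longrightarrow> lt a b \<or> lt b a"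
    using insert.prems unfolding sord_def by blast+
  show ?case
  proof (cases "lt x m")
    case True
    have "\<forall>m'\<in>insert x F. m' \<noteq> m \<longrightarrow> lt m' m"
    proof (intro ballI impI)
      fix m' assume "m' \<in> insert x F" "m' \<noteq> m"
      then show "lt m' m" using True m by (cases "m' = x") auto
    qed
    then show ?thesis using m by blast
  next
    case False
    have "x \<noteq> m" using m insert.hyps by blast
    then have mx: "lt m x" using to[of x m] False m by blast
    have "\<forall>m'\<in>insert x F. m' \<noteq> x \<longrightarrow> lt m' x"
    proof (intro ballI impI)
      fix m' assume a: "m' \<in> insert x F" "m' \<noteq> x"
      then have "m' \<in> F" by blast
      show "lt m' x"
      proof (cases "m' = m")
        case True then show ?thesis using mx by simp
      next
        case False
        then have "lt m' m" using m \<open>m' \<in> F\<close> by blast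
        then show ?thesis using tr[of m' m x] mx \<open>m' \<in> F\<close> m by blast
      qed
    qed
    then show ?thesis by blast
  qed
qed

lemma sord_irr: "sord K lt \<Longrightarrow> a \<in> K \<Longrightarrow> \<not> lt a a"
  unfolding sord_def by (elim conjE) (erule bspec)

lemma sord_trans: "sord K lt \<Longrightarrow> a \<in> K \<Longrightarrow> b \<in> K \<Longrightarrow> c \<in> K \<Longrightarrow> lt a b \<Longrightarrow> lt b c \<Longrightarrow> lt a c"
  unfolding sord_def by (elim conjE) (meson)

lemma sord_total: "sord K lt \<Longrightarrow> a \<in> K \<Longrightarrow> b \<in> K \<Longrightarrow> a \<noteq> b \<Longrightarrow> lt a b \<or> lt b a"
  unfolding sord_def by (elim conjE) (meson)

lemma sord_asym: "sord K lt \<Longrightarrow> a \<in> K \<Longrightarrow> b \<in> K \<Longrightarrow> lt a b \<Longrightarrow> \<not> lt b a"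
  using sord_irr sord_trans by metis

lemma LM_eq:
  assumes "sord (Poly_Mapping.keys p) lt" "m \<in> Poly_Mapping.keys p"
    "\<forall>m'\<in>Poly_Mapping.keys p. m' \<noteq> m \<longrightarrow> lt m' m"
  shows "LM lt p = m"
  unfolding LM_def
proof (rule the_equality)
  show "m \<in> Poly_Mapping.keys p \<and> (\<forall>m'\<in>Poly_Mapping.keys p. m' \<noteq> m \<longrightarrow> lt m' m)" using assms by blast
next
  fix x assume x: "x \<in> Poly_Mapping.keys p \<and> (\<forall>m'\<in>Poly_Mapping.keys p. m' \<noteq> x \<longrightarrow> lt m' x)"
  show "x = m"
  proof (rule ccontr)
    assume "x \<noteq> m"
    have "m \<noteq> x" using \<open>x \<noteq> m\<close> by simp
    have "lt m x" using assms(2) x \<open>m \<noteq> x\<close> by blast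
    have "lt x m" using assms(3) x \<open>x \<noteq> m\<close> by blast
    then show False using sord_asym[OF assms(1)] x assms(2) \<open>lt m x\<close> by blast
  qed
qed

lemma LM_props:
  assumes "sord (Poly_Mapping.keys p) lt" "p \<noteq> 0"
  shows "LM lt p \<in> Poly_Mapping.keys p \<and> (\<forall>m'\<in>Poly_Mapping.keys p. m' \<noteq> LM lt p \<longrightarrow> lt m' (LM lt p))"
proof -
  obtain m where m: "m \<in> Poly_Mapping.keys p" "\<forall>m'\<in>Poly_Mapping.keys p. m' \<noteq> m \<longrightarrow> lt m' m"
    using sord_max[OF _ _ assms(1)] assms(2) by auto
  have "LM lt p = m" by (rule LM_eq[OF assms(1) m])
  then show ?thesis using m by simp
qed

lemma mo_irr: "monomial_order S ord \<Longrightarrow> s \<in> S \<Longrightarrow> \<not> ord s s"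
  unfolding monomial_order_def by (elim conjE) (erule bspec)

lemma mo_trans: "monomial_order S ord \<Longrightarrow> s \<in> S \<Longrightarrow> t \<in> S \<Longrightarrow> u \<in> S \<Longrightarrow> ord s t \<Longrightarrow> ord t u \<Longrightarrow> ord s u"
  unfolding monomial_order_def by (elim conjE) meson

lemma mo_total: "monomial_order S ord \<Longrightarrow> s \<in> S \<Longrightarrow> t \<in> S \<Longrightarrow> s \<noteq> t \<Longrightarrow> ord s t \<or> ord t s"
  unfolding monomial_order_def by (elim conjE) meson

lemma mo_compat: "monomial_order S ord \<Longrightarrow> s \<in> S \<Longrightarrow> t \<in> S \<Longrightarrow> u \<in> S \<Longrightarrow> ord s t \<Longrightarrow> ord (s + u) (t + u)"
  unfolding monomial_order_def by (elim conjE) meson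

lemma sord_sparse:
  assumes "monomial_order (SM M) ord"
  shows "sord (SM M) (sparse_less M ord)"
  unfolding sord_def
proof (intro conjI ballI impI)
  fix a assume "a \<in> SM M" then show "\<not> sparse_less M ord a a" using mo_irr[OF assms] unfolding sparse_less_def by simp
next
  fix a b c assume abc: "a \<in> SM M" "b \<in> SM M" "c \<in> SM M" "sparse_less M ord a b" "sparse_less M ord b c"
  show "sparse_less M ord a c"
  proof (cases "deltaA M a = deltaA M b \<and> deltaA M b = deltaA M c")
    case True
    then have "ord a b" "ord b c" using abc(4,5) unfolding sparse_less_def by auto
    then have "ord a c" by (rule mo_trans[OF assms abc(1,2,3)])
    then show ?thesis using True unfolding sparse_less_def by simp
  next
    case False
    then show ?thesis using abc(4,5) unfolding sparse_less_def by auto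
  qed
next
  fix a b assume ab: "a \<in> SM M" "b \<in> SM M" "a \<noteq> b"
  have "ord a b \<or> ord b a" by (rule mo_total[OF assms ab])
  then show "sparse_less M ord a b \<or> sparse_less M ord b a"
    unfolding sparse_less_def by linarith
qed

lemma sord_gsparse:
  assumes "monomial_order (SM M) ord"
  shows "sord (SMh M) (gsparse_less M ord)"
proof -
  have s: "sord (SM M) (sparse_less M ord)" by (rule sord_sparse[OF assms])
  show ?thesis unfolding sord_def gsparse_less_def
  proof (intro conjI ballI impI)
    fix a assume "a \<in> SMh M"
    then have "\<not> sparse_less M ord (fst a) (fst a)" using sord_irr[OF s] SMh_fst by blast
    then show "\<not> (snd a < snd a \<or> snd a = snd a \<and> sparse_less M ord (fst a) (fst a))"
      by simp
  next
    fix a b c assume abc: "a \<in> SMh M" "b \<in> SMh M" "c \<in> SMh M"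
      "snd a < snd b \<or> snd a = snd b \<and> sparse_less M ord (fst a) (fst b)"
      "snd b < snd c \<or> snd b = snd c \<and> sparse_less M ord (fst b) (fst c)"
    then have "fst a \<in> SM M" "fst b \<in> SM M" "fst c \<in> SM M" using SMh_fst by blast+
    then have "sparse_less M ord (fst a) (fst b) \<Longrightarrow> sparse_less M ord (fst b) (fst c) \<Longrightarrow> sparse_less M ord (fst a) (fst c)"
      using sord_trans[OF s] by blast
    then show "snd a < snd c \<or> snd a = snd c \<and> sparse_less M ord (fst a) (fst c)"
      using abc(4,5) by auto
  next
    fix a b assume ab: "a \<in> SMh M" "b \<in> SMh M" "a \<noteq> b"
    then have "fst a \<in> SM M" "fst b \<in> SM M" using SMh_fst by blast+
    moreover have "snd a = snd b \<Longrightarrow> fst a \<noteq> fst b" using ab prod_eq_iff by blast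
    ultimately have "snd a = snd b \<Longrightarrow> sparse_less M ord (fst a) (fst b) \<or> sparse_less M ord (fst b) (fst a)"
      using sord_total[OF s] by blast
    then show "(snd a < snd b \<or> snd a = snd b \<and> sparse_less M ord (fst a) (fst b)) \<or>
           (snd b < snd a \<or> snd b = snd a \<and> sparse_less M ord (fst b) (fst a))"
      by auto
  qed
qed

lemma sparse_compat:
  assumes "monomial_order (SM M) ord" "s \<in> SM M" "t \<in> SM M" "u \<in> SM M"
    "sparse_less M ord s t" "deltaA M (t+u) = deltaA M t + deltaA M u"
  shows "sparse_less M ord (s+u) (t+u)"
proof -
  have d: "deltaA M (s+u) \<le> deltaA M s + deltaA M u" using deltaA_subadd assms by blast
  have "deltaA M s \<le> deltaA M t" using assms(5) unfolding sparse_less_def by auto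
  show ?thesis
  proof (cases "deltaA M (s+u) < deltaA M (t+u)")
    case True
    then show ?thesis unfolding sparse_less_def by simp
  next
    case False
    then have "deltaA M s = deltaA M t" using d assms(6) \<open>deltaA M s \<le> deltaA M t\<close> by linarith
    then have "ord s t" using assms(5) unfolding sparse_less_def by simp
    then have "ord (s+u) (t+u)" by (rule mo_compat[OF assms(1-4)])
    moreover have "deltaA M (s+u) = deltaA M (t+u)" using False d assms(6) \<open>deltaA M s = deltaA M t\<close> by linarith
    ultimately show ?thesis unfolding sparse_less_def by simp
  qed
qed

definition hk :: "nat \<Rightarrow> (int^'n \<Rightarrow>\<^sub>0 'k::comm_monoid_add) \<Rightarrow> ((int^'n) \<times> int \<Rightarrow>\<^sub>0 'k)" where
  "hk k f = (\<Sum>s\<in>Poly_Mapping.keys f. Poly_Mapping.single (s, int k) (Poly_Mapping.lookup f s))"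

lemma homog_hk: "homog M f = hk (deltaA_poly M f) f"
  unfolding homog_def hk_def ..

lemma lookup_hk: "Poly_Mapping.lookup (hk k f) x = (if snd x = int k then Poly_Mapping.lookup f (fst x) else 0)"
proof -
  have "Poly_Mapping.lookup (hk k f) x
      = (\<Sum>s\<in>Poly_Mapping.keys f. if s = fst x \<and> snd x = int k then Poly_Mapping.lookup f s else 0)"
    unfolding hk_def lookup_sum lookup_single when_def
    by (intro sum.cong refl) (metis prod.collapse fst_conv snd_conv)
  also have "\<dots> = (if snd x = int k then Poly_Mapping.lookup f (fst x) else 0)"
  proof (cases "snd x = int k")
    case True
    then show ?thesis by (simp add: sum.delta in_keys_iff)
  next
    case False
    then show ?thesis by simp
  qed
  finally show ?thesis .
qed

lemma keys_hk: "Poly_Mapping.keys (hk k f) = (\<lambda>s. (s, int k)) ` Poly_Mapping.keys f"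
proof (rule set_eqI)
  fix x :: "(int^'a) \<times> int"
  show "x \<in> Poly_Mapping.keys (hk k f) \<longleftrightarrow> x \<in> (\<lambda>s. (s, int k)) ` Poly_Mapping.keys f"
    unfolding in_keys_iff[of x] lookup_hk by (cases x) (force simp: in_keys_iff)
qed

lemma hk_zero: "hk k 0 = 0"
  unfolding hk_def by simp

lemma dpoly_ge: "s \<in> Poly_Mapping.keys f \<Longrightarrow> deltaA M s \<le> deltaA_poly M f"
  unfolding deltaA_poly_def by (rule Max_ge) auto

lemma dpoly_le: "(\<And>s. s \<in> Poly_Mapping.keys f \<Longrightarrow> deltaA M s \<le> k) \<Longrightarrow> deltaA_poly M f \<le> k"
  unfolding deltaA_poly_def by (subst Max_le_iff) auto

lemma hk_alg:
  assumes "0 \<in> M" "f \<in> alg (SM M)" "deltaA_poly M f \<le> k"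
  shows "hk k f \<in> alg (SMh M)"
proof -
  have "(s, int k) \<in> SMh M" if s: "s \<in> Poly_Mapping.keys f" for s
  proof -
    have "s \<in> SM M" using s assms(2) unfolding alg_def by blast
    then have "(s, int (deltaA M s)) \<in> SMh M" by (rule deltaA_mem)
    moreover have "deltaA M s \<le> k" using dpoly_ge[OF s, of M] assms(3) by simp
    ultimately show ?thesis using SMh_up[OF assms(1), of s "int (deltaA M s)" "int k"] by linarith
  qed
  then have "Poly_Mapping.keys (hk k f) \<subseteq> SMh M" by (simp add: keys_hk image_subset_iff)
  then show ?thesis unfolding alg_def by simp
qed

definition cd :: "int \<Rightarrow> ((int^'n) \<times> int \<Rightarrow>\<^sub>0 'k::zero) \<Rightarrow> (int^'n \<Rightarrow>\<^sub>0 'k)" where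
  "cd d F = Abs_poly_mapping (\<lambda>s. Poly_Mapping.lookup F (s, d))"

lemma lookup_cd: "Poly_Mapping.lookup (cd d F) s = Poly_Mapping.lookup F (s, d)"
proof -
  have "{s. Poly_Mapping.lookup F (s, d) \<noteq> 0} \<subseteq> fst ` Poly_Mapping.keys F"
  proof
    fix s assume "s \<in> {s. Poly_Mapping.lookup F (s, d) \<noteq> 0}"
    then have "(s, d) \<in> Poly_Mapping.keys F" by (simp add: in_keys_iff)
    then show "s \<in> fst ` Poly_Mapping.keys F" by (rule image_eqI[rotated]) simp
  qed
  then have "finite {s. Poly_Mapping.lookup F (s, d) \<noteq> 0}"
    by (rule finite_subset) simp
  then have "Poly_Mapping.lookup (Abs_poly_mapping (\<lambda>s. Poly_Mapping.lookup F (s, d))) = (\<lambda>s. Poly_Mapping.lookup F (s, d))"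
    by (rule lookup_Abs_poly_mapping)
  then show ?thesis unfolding cd_def by (rule fun_cong)
qed

lemma cd_add: "cd d (F + G) = cd d F + cd d G"
  by (rule poly_mapping_eqI) (simp add: lookup_add lookup_cd)

lemma cd_zero: "cd d 0 = 0"
  by (rule poly_mapping_eqI) (simp add: lookup_cd)

lemma cd_sum: "cd d (sum h S) = (\<Sum>x\<in>S. cd d (h x))"
  by (rule poly_mapping_eqI) (simp add: lookup_sum lookup_cd)

lemma cd_single_mult:
  fixes F :: "(int^'n) \<times> int \<Rightarrow>\<^sub>0 'k::field"
  shows "cd d (Poly_Mapping.single a c * F) = Poly_Mapping.single (fst a) c * cd (d - snd a) F"
proof (rule poly_mapping_eqI)
  fix s
  obtain a1 a2 where a: "a = (a1, a2)" by (cases a)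
  show "Poly_Mapping.lookup (cd d (Poly_Mapping.single a c * F)) s =
        Poly_Mapping.lookup (Poly_Mapping.single (fst a) c * cd (d - snd a) F) s"
    unfolding lookup_cd lookup_single_mult a by simp
qed

lemma cd_hk: "cd d (hk k f) = (if d = int k then f else 0)"
  by (rule poly_mapping_eqI) (simp add: lookup_cd lookup_hk)

lemma Q_ideal:
  fixes I :: "(int^'n \<Rightarrow>\<^sub>0 'k::field) set" and M :: "(real^'n) set"
  assumes I: "ideal_in (alg (SM M)) I"
  shows "ideal_in (alg (SMh M)) {F \<in> alg (SMh M). \<forall>d. cd d F \<in> I}"
proof -
  let ?Q = "{F \<in> alg (SMh M). \<forall>d. cd d F \<in> I}"
  have I0: "0 \<in> I" and Iadd: "\<And>a b. a \<in> I \<Longrightarrow> b \<in> I \<Longrightarrow> a + b \<in> I"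
    and Imul: "\<And>r a. r \<in> alg (SM M) \<Longrightarrow> a \<in> I \<Longrightarrow> r * a \<in> I"
    using I unfolding ideal_in_def by blast+
  have "0 \<in> ?Q" unfolding alg_def using I0 by (simp add: cd_zero)
  moreover have "\<forall>a\<in>?Q. \<forall>b\<in>?Q. a + b \<in> ?Q"
  proof (intro ballI)
    fix a b assume a: "a \<in> ?Q" and b: "b \<in> ?Q"
    then have "a + b \<in> alg (SMh M)" using alg_add by blast
    moreover have "\<forall>d. cd d (a + b) \<in> I" using a b Iadd by (simp add: cd_add)
    ultimately show "a + b \<in> ?Q" by blast
  qed
  moreover have "\<forall>r\<in>alg (SMh M). \<forall>a\<in>?Q. r * a \<in> ?Q"
  proof (intro ballI)
    fix r F :: "(int^'n) \<times> int \<Rightarrow>\<^sub>0 'k" assume r: "r \<in> alg (SMh M)" and F: "F \<in> ?Q"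
    have "r * F \<in> alg (SMh M)" using r F alg_mult unfolding SMh_def by blast
    moreover have "cd d (r * F) \<in> I" for d
    proof -
      have "r * F = (\<Sum>a\<in>Poly_Mapping.keys r. Poly_Mapping.single a (Poly_Mapping.lookup r a)) * F"
        using pm_expand[of r] by simp
      also have "\<dots> = (\<Sum>a\<in>Poly_Mapping.keys r. Poly_Mapping.single a (Poly_Mapping.lookup r a) * F)"
        by (rule sum_distrib_right)
      finally have "cd d (r * F) = (\<Sum>a\<in>Poly_Mapping.keys r.
           Poly_Mapping.single (fst a) (Poly_Mapping.lookup r a) * cd (d - snd a) F)"
        by (simp add: cd_sum cd_single_mult)
      also have "\<dots> \<in> I"
      proof (rule ideal_sum[OF I finite_keys])
        fix a assume a: "a \<in> Poly_Mapping.keys r"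
        then have "fst a \<in> SM M" using r SMh_fst unfolding alg_def by blast
        then have "Poly_Mapping.single (fst a) (Poly_Mapping.lookup r a) \<in> alg (SM M)"
          unfolding alg_def by simp
        then show "Poly_Mapping.single (fst a) (Poly_Mapping.lookup r a) * cd (d - snd a) F \<in> I"
          using Imul F by blast
      qed
      finally show ?thesis .
    qed
    ultimately show "r * F \<in> ?Q" by blast
  qed
  ultimately show ?thesis unfolding ideal_in_def[of _ ?Q] by blast
qed

lemma dpoly_LM:
  assumes "sord (Poly_Mapping.keys f) (sparse_less M ord)" "f \<noteq> 0"
  shows "deltaA_poly M f = deltaA M (LM (sparse_less M ord) f)"
proof -
  let ?m = "LM (sparse_less M ord) f"
  have m: "?m \<in> Poly_Mapping.keys f" "\<forall>m'\<in>Poly_Mapping.keys f. m' \<noteq> ?m \<longrightarrow> sparse_less M ord m' ?m"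
    using LM_props[OF assms] by blast+
  have "deltaA_poly M f \<le> deltaA M ?m"
  proof (rule dpoly_le)
    fix s assume s: "s \<in> Poly_Mapping.keys f"
    show "deltaA M s \<le> deltaA M ?m"
    proof (cases "s = ?m")
      case False
      then have "sparse_less M ord s ?m" using m s by blast
      then show ?thesis unfolding sparse_less_def by auto
    qed simp
  qed
  moreover have "deltaA M ?m \<le> deltaA_poly M f" by (rule dpoly_ge[OF m(1)])
  ultimately show ?thesis by simp
qed

theorem mainTheorem7:
  fixes M :: "(real^'n) set"
    and ord :: "int^'n \<Rightarrow> int^'n \<Rightarrow> bool"
    and I G :: "(int^'n \<Rightarrow>\<^sub>0 'k::field_char_0) set"
  assumes "polytope M" and "0 \<in> M"
    and "pointed (SM M)" and "pointed (SMh M)"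
    and "monomial_order (SM M) ord"
    and "ideal_in (alg (SM M)) I"
    and "sparse_GB (alg (SM M)) (sparse_less M ord) (sdvd M) I G"
  shows "sparse_GB (alg (SMh M)) (gsparse_less M ord) (sdvd_h M)
           (gen_ideal (alg (SMh M)) (homog M ` I)) (homog M ` G)"
proof -
  note poly = assms(1) and M0 = assms(2) and mo = assms(5) and Iid = assms(6)
  let ?A = "alg (SM M) :: (int^'n \<Rightarrow>\<^sub>0 'k) set"
  let ?Ah = "alg (SMh M) :: ((int^'n) \<times> int \<Rightarrow>\<^sub>0 'k) set"
  let ?lt = "sparse_less M ord"
  let ?glt = "gsparse_less M ord"
  let ?J = "gen_ideal ?Ah (homog M ` I)"
  let ?K = "gen_ideal ?Ah (homog M ` G)"
  have IA: "I \<subseteq> ?A" using Iid unfolding ideal_in_def by blast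
  have Iadd: "\<And>a b. a \<in> I \<Longrightarrow> b \<in> I \<Longrightarrow> a + b \<in> I"
    and Imul: "\<And>r a. r \<in> ?A \<Longrightarrow> a \<in> I \<Longrightarrow> r * a \<in> I"
    using Iid unfolding ideal_in_def by blast+
  have GI: "G \<subseteq> I" using assms(7) unfolding sparse_GB_def by blast
  have GB: "\<And>f. f \<in> I \<Longrightarrow> f \<noteq> 0 \<Longrightarrow> \<exists>g\<in>G. g \<noteq> 0 \<and> sdvd M (LM ?lt g) (LM ?lt f)"
    using assms(7) unfolding sparse_GB_def by blast
  have AhI: "ideal_in ?Ah ?Ah" unfolding SMh_def by (rule ideal_alg)
  have hom_alg: "\<And>f. f \<in> ?A \<Longrightarrow> homog M f \<in> ?Ah"
    unfolding homog_hk by (rule hk_alg[OF M0]) simp_all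
  have hI: "homog M ` I \<subseteq> ?Ah" using hom_alg IA by blast
  have hG: "homog M ` G \<subseteq> ?Ah" using hI GI by blast
  have Jid: "ideal_in ?Ah ?J" by (rule gen_ideal_ideal[OF AhI hI])
  have Kid: "ideal_in ?Ah ?K" by (rule gen_ideal_ideal[OF AhI hG])
  have K0: "0 \<in> ?K" and Kadd: "\<And>a b. a \<in> ?K \<Longrightarrow> b \<in> ?K \<Longrightarrow> a + b \<in> ?K"
    and Kmul: "\<And>r a. r \<in> ?Ah \<Longrightarrow> a \<in> ?K \<Longrightarrow> r * a \<in> ?K"
    using Kid unfolding ideal_in_def by blast+
  have GJ: "homog M ` G \<subseteq> ?J" using gen_ideal_sub[of "homog M ` I" ?Ah] GI by blast
  have KJ: "?K \<subseteq> ?J" by (rule gen_ideal_least[OF Jid GJ])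
  have sordS: "sord (SM M) ?lt" by (rule sord_sparse[OF mo])
  have sordA: "\<And>f. f \<in> ?A \<Longrightarrow> sord (Poly_Mapping.keys f) ?lt"
    using sord_mono[OF sordS] unfolding alg_def by blast
  have sordAh: "\<And>f. f \<in> ?Ah \<Longrightarrow> sord (Poly_Mapping.keys f) ?glt"
    using sord_mono[OF sord_gsparse[OF mo]] unfolding alg_def by blast
  have LMA: "\<And>f. f \<in> ?A \<Longrightarrow> f \<noteq> 0 \<Longrightarrow> LM ?lt f \<in> Poly_Mapping.keys f \<and>
      (\<forall>m'\<in>Poly_Mapping.keys f. m' \<noteq> LM ?lt f \<longrightarrow> ?lt m' (LM ?lt f))"
    using LM_props sordA by blast
  have keysA: "\<And>f s. f \<in> ?A \<Longrightarrow> s \<in> Poly_Mapping.keys f \<Longrightarrow> s \<in> SM M"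
    unfolding alg_def by blast
  have neg1: "Poly_Mapping.single 0 (-1) \<in> ?A" unfolding alg_def using SM_zero by simp

  have main: "hk k f \<in> ?K" if fI: "f \<in> I" and fk: "deltaA_poly M f \<le> k" for k f
  proof -
    define D where "D = {s \<in> SM M. deltaA M s \<le> k}"
    define R where "R = {(a,b). a \<in> D \<and> b \<in> D \<and> ?lt a b}"
    have "D \<subseteq> {s. \<exists>d\<le>k. (s, int d) \<in> SMh M}"
      unfolding D_def using deltaA_mem by blast
    then have finD: "finite D" using finite_level[OF poly, of k] finite_subset by blast
    have "R \<subseteq> D \<times> D" unfolding R_def by blast
    then have finR: "finite R" using finD finite_subset by blast
    have trR: "trans R"
    proof (rule transI)
      fix x y z assume "(x,y) \<in> R" "(y,z) \<in> R"
      then show "(x,z) \<in> R" unfolding R_def D_def using sord_trans[OF sordS] by blast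
    qed
    have "acyclic R" unfolding acyclic_def
    proof
      fix x have "R\<^sup>+ = R" by (rule trancl_id[OF trR])
      moreover have "(x,x) \<notin> R" unfolding R_def D_def using sord_irr[OF sordS] by blast
      ultimately show "(x,x) \<notin> R\<^sup>+" by simp
    qed
    then have wfR: "wf R" using finite_acyclic_wf finR by blast
    have P: "\<forall>f. f \<in> I \<and> f \<noteq> 0 \<and> deltaA_poly M f \<le> k \<and> LM ?lt f = m \<longrightarrow> hk k f \<in> ?K" for m
    proof (induct m rule: wf_induct[OF wfR])
      case (1 m)
      show ?case
      proof (intro allI impI)
        fix f assume f: "f \<in> I \<and> f \<noteq> 0 \<and> deltaA_poly M f \<le> k \<and> LM ?lt f = m"
        then have fA: "f \<in> ?A" and f0: "f \<noteq> 0" and fk: "deltaA_poly M f \<le> k" and fm: "LM ?lt f = m"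
          using IA by blast+
        have mk: "m \<in> Poly_Mapping.keys f" and mmax: "\<forall>m'\<in>Poly_Mapping.keys f. m' \<noteq> m \<longrightarrow> ?lt m' m"
          using LMA[OF fA f0] fm by blast+
        have mS: "m \<in> SM M" using keysA[OF fA mk] .
        have dmk: "deltaA M m \<le> k" using dpoly_ge[OF mk, of M] fk by simp
        obtain g where g: "g \<in> G" "g \<noteq> 0" "sdvd M (LM ?lt g) m" using GB f fm by blast
        define mg where "mg = LM ?lt g"
        have gA: "g \<in> ?A" using g GI IA by blast
        have mgk: "mg \<in> Poly_Mapping.keys g" and mgmax: "\<forall>m'\<in>Poly_Mapping.keys g. m' \<noteq> mg \<longrightarrow> ?lt m' mg"
          using LMA[OF gA g(2)] unfolding mg_def by blast+
        have mgS: "mg \<in> SM M" using keysA[OF gA mgk] .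
        have dg: "deltaA_poly M g = deltaA M mg" unfolding mg_def by (rule dpoly_LM[OF sordA[OF gA] g(2)])
        obtain t where t: "t \<in> SMh M" "(mg, int (deltaA M mg)) + t = (m, int (deltaA M m))"
          "deltaA M (fst (mg, int (deltaA M mg))) + deltaA M (fst t) = deltaA M (fst (m, int (deltaA M m)))"
          using g(3) unfolding sdvd_def sdvd_h_def sdeg_single mg_def by blast
        define u where "u = fst t"
        have uS: "u \<in> SM M" unfolding u_def using SMh_fst[OF t(1)] .
        have mgu: "mg + u = m" using arg_cong[OF t(2), of fst] unfolding u_def by simp
        have sndt: "int (deltaA M mg) + snd t = int (deltaA M m)" using arg_cong[OF t(2), of snd] by simp
        have du: "deltaA M (mg + u) = deltaA M mg + deltaA M u" using t(3) mgu unfolding u_def by simp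
        have gmg: "Poly_Mapping.lookup g mg \<noteq> 0" using mgk by (simp add: in_keys_iff)
        define c where "c = Poly_Mapping.lookup f m / Poly_Mapping.lookup g mg"
        define h where "h = f - Poly_Mapping.single u c * g"
        have suA: "Poly_Mapping.single u c \<in> ?A" unfolding alg_def using uS by simp
        have "g \<in> I" using g GI by blast
        then have sgI: "Poly_Mapping.single u c * g \<in> I" by (rule Imul[OF suA])
        have hI: "h \<in> I" unfolding h_def using ideal_diff[OF Iid neg1 _ sgI] f by blast
        have lookh: "Poly_Mapping.lookup h x = Poly_Mapping.lookup f x - c * Poly_Mapping.lookup g (x - u)" for x
          unfolding h_def by (simp add: lookup_minus lookup_single_mult)
        have key: "\<forall>x\<in>Poly_Mapping.keys h. ?lt x m"
        proof
          fix x assume xh: "x \<in> Poly_Mapping.keys h"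
          then have hx: "Poly_Mapping.lookup f x - c * Poly_Mapping.lookup g (x - u) \<noteq> 0"
            using lookh by (simp add: in_keys_iff)
          have "m - u = mg" using mgu by (metis add_diff_cancel)
          then have "Poly_Mapping.lookup f m - c * Poly_Mapping.lookup g (m - u) = 0"
            unfolding c_def using gmg by simp
          then have xm: "x \<noteq> m" using hx by blast
          show "?lt x m"
          proof (cases "Poly_Mapping.lookup f x = 0")
            case False
            then have "x \<in> Poly_Mapping.keys f" by (simp add: in_keys_iff)
            then show ?thesis using mmax xm by blast
          next
            case True
            then have "Poly_Mapping.lookup g (x - u) \<noteq> 0" using hx by auto
            then have xu: "x - u \<in> Poly_Mapping.keys g" by (simp add: in_keys_iff)
            have "x - u \<noteq> mg" using xm mgu by (metis diff_add_cancel)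
            then have "?lt (x - u) mg" using mgmax xu by blast
            then have "?lt (x - u + u) (mg + u)"
              by (rule sparse_compat[OF mo keysA[OF gA xu] mgS uS _ du])
            then show ?thesis using mgu by simp
          qed
        qed
        have hK: "hk k h \<in> ?K"
        proof (cases "h = 0")
          case True
          then show ?thesis using K0 by (simp add: hk_zero)
        next
          case False
          have hA: "h \<in> ?A" using hI IA by blast
          have lh: "LM ?lt h \<in> Poly_Mapping.keys h" using LMA[OF hA False] by blast
          have hk': "deltaA_poly M h \<le> k"
          proof (rule dpoly_le)
            fix s assume "s \<in> Poly_Mapping.keys h"
            then have "?lt s m" using key by blast
            then have "deltaA M s \<le> deltaA M m" unfolding sparse_less_def by auto
            then show "deltaA M s \<le> k" using dmk by simp
          qed
          have "(LM ?lt h, m) \<in> R"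
            unfolding R_def D_def using key lh keysA[OF hA lh] dpoly_ge[OF lh, of M] hk' mS dmk by auto
          then show ?thesis using 1 hI False hk' by blast
        qed
        have eq: "hk k f = hk k h + Poly_Mapping.single (u, int k - int (deltaA_poly M g)) c * homog M g"
        proof (rule poly_mapping_eqI)
          fix x :: "(int^'n) \<times> int"
          obtain s e where x: "x = (s, e)" by (cases x)
          show "Poly_Mapping.lookup (hk k f) x = Poly_Mapping.lookup (hk k h + Poly_Mapping.single (u, int k - int (deltaA_poly M g)) c * homog M g) x"
            unfolding x lookup_add lookup_single_mult homog_hk lookup_hk lookh by simp
        qed
        have "(u, snd t) \<in> SMh M" using t(1) unfolding u_def by simp
        moreover have "snd t \<le> int k - int (deltaA_poly M g)" using sndt dg dmk by linarith
        ultimately have "(u, int k - int (deltaA_poly M g)) \<in> SMh M" by (rule SMh_up[OF M0])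
        then have sA: "Poly_Mapping.single (u, int k - int (deltaA_poly M g)) c \<in> ?Ah"
          unfolding alg_def by simp
        have "homog M g \<in> ?K" using gen_ideal_sub[of "homog M ` G" ?Ah] g(1) by blast
        then have "Poly_Mapping.single (u, int k - int (deltaA_poly M g)) c * homog M g \<in> ?K"
          by (rule Kmul[OF sA])
        then show "hk k f \<in> ?K" unfolding eq using hK Kadd by blast
      qed
    qed
    show ?thesis
    proof (cases "f = 0")
      case True
      then show ?thesis using K0 by (simp add: hk_zero)
    next
      case False
      then show ?thesis using P[of "LM ?lt f"] fI fk by blast
    qed
  qed
  have IK: "homog M ` I \<subseteq> ?K"
  proof
    fix x assume "x \<in> homog M ` I"
    then obtain f where "f \<in> I" "x = homog M f" by blast
    then show "x \<in> ?K" using main[of f "deltaA_poly M f"] by (simp add: homog_hk[of M f])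
  qed
  have JK: "?J \<subseteq> ?K" by (rule gen_ideal_least[OF Kid IK])
  define Q where "Q = {F \<in> ?Ah. \<forall>d. cd d F \<in> I}"
  have Qid: "ideal_in ?Ah Q" unfolding Q_def by (rule Q_ideal[OF Iid])
  have hQ: "homog M ` I \<subseteq> Q"
  proof
    fix x assume "x \<in> homog M ` I"
    then obtain f where f: "f \<in> I" "x = homog M f" by blast
    have "x \<in> ?Ah" using hI f by blast
    moreover have "cd d x \<in> I" for d
      unfolding f(2) homog_hk cd_hk using f(1) Iid unfolding ideal_in_def by simp
    ultimately show "x \<in> Q" unfolding Q_def by blast
  qed
  have JQ: "?J \<subseteq> Q" by (rule gen_ideal_least[OF Qid hQ])
  have div: "\<forall>F\<in>?J. F \<noteq> 0 \<longrightarrow> (\<exists>g'\<in>homog M ` G. g' \<noteq> 0 \<and> sdvd_h M (LM ?glt g') (LM ?glt F))"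
  proof (intro ballI impI)
    fix F assume FJ: "F \<in> ?J" and F0: "F \<noteq> 0"
    then have FQ: "F \<in> Q" using JQ by blast
    then have FA: "F \<in> ?Ah" and Fcd: "\<And>d. cd d F \<in> I" unfolding Q_def by blast+
    obtain r d where rd: "LM ?glt F = (r, d)" by (cases "LM ?glt F")
    have rdk: "(r,d) \<in> Poly_Mapping.keys F" and rdmax: "\<forall>x\<in>Poly_Mapping.keys F. x \<noteq> (r,d) \<longrightarrow> ?glt x (r,d)"
      using LM_props[OF sordAh[OF FA] F0] unfolding rd by blast+
    have rdS: "(r,d) \<in> SMh M" using FA rdk unfolding alg_def by blast
    define phi where "phi = cd d F"
    have phiI: "phi \<in> I" unfolding phi_def by (rule Fcd)
    have phiA: "phi \<in> ?A" using phiI IA by blast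
    have rphi: "r \<in> Poly_Mapping.keys phi" unfolding phi_def using rdk by (simp add: in_keys_iff lookup_cd)
    then have phi0: "phi \<noteq> 0" by auto
    have "LM ?lt phi = r"
    proof (rule LM_eq[OF sordA[OF phiA] rphi])
      show "\<forall>m'\<in>Poly_Mapping.keys phi. m' \<noteq> r \<longrightarrow> ?lt m' r"
      proof (intro ballI impI)
        fix s assume s: "s \<in> Poly_Mapping.keys phi" "s \<noteq> r"
        then have "(s,d) \<in> Poly_Mapping.keys F" unfolding phi_def by (simp add: in_keys_iff lookup_cd)
        then have "?glt (s,d) (r,d)" using rdmax s(2) by blast
        then show "?lt s r" unfolding gsparse_less_def by simp
      qed
    qed
    then obtain g where g: "g \<in> G" "g \<noteq> 0" "sdvd M (LM ?lt g) r" using GB[OF phiI phi0] by auto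
    define mg where "mg = LM ?lt g"
    have gA: "g \<in> ?A" using g GI IA by blast
    have mgk: "mg \<in> Poly_Mapping.keys g" and mgmax: "\<forall>m'\<in>Poly_Mapping.keys g. m' \<noteq> mg \<longrightarrow> ?lt m' mg"
      using LMA[OF gA g(2)] unfolding mg_def by blast+
    have dg: "deltaA_poly M g = deltaA M mg" unfolding mg_def by (rule dpoly_LM[OF sordA[OF gA] g(2)])
    have hgA: "homog M g \<in> ?Ah" using hom_alg[OF gA] .
    have khg: "Poly_Mapping.keys (homog M g) = (\<lambda>s. (s, int (deltaA_poly M g))) ` Poly_Mapping.keys g"
      unfolding homog_hk keys_hk ..
    have mgh: "(mg, int (deltaA_poly M g)) \<in> Poly_Mapping.keys (homog M g)" using khg mgk by blast
    then have hg0: "homog M g \<noteq> 0" by auto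
    have LMhg: "LM ?glt (homog M g) = (mg, int (deltaA_poly M g))"
    proof (rule LM_eq[OF sordAh[OF hgA] mgh])
      show "\<forall>m'\<in>Poly_Mapping.keys (homog M g). m' \<noteq> (mg, int (deltaA_poly M g)) \<longrightarrow> ?glt m' (mg, int (deltaA_poly M g))"
      proof (intro ballI impI)
        fix x assume x: "x \<in> Poly_Mapping.keys (homog M g)" "x \<noteq> (mg, int (deltaA_poly M g))"
        then obtain s where s: "s \<in> Poly_Mapping.keys g" "x = (s, int (deltaA_poly M g))" using khg by blast
        then have "s \<noteq> mg" using x(2) by blast
        then have "?lt s mg" using mgmax s(1) by blast
        then show "?glt x (mg, int (deltaA_poly M g))" unfolding s(2) gsparse_less_def by simp
      qed
    qed
    obtain t where t: "t \<in> SMh M" "(mg, int (deltaA M mg)) + t = (r, int (deltaA M r))"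
      "deltaA M (fst (mg, int (deltaA M mg))) + deltaA M (fst t) = deltaA M (fst (r, int (deltaA M r)))"
      using g(3) unfolding sdvd_def sdvd_h_def sdeg_single mg_def by blast
    have mgt: "mg + fst t = r" using arg_cong[OF t(2), of fst] by simp
    have sndt: "int (deltaA M mg) + snd t = int (deltaA M r)" using arg_cong[OF t(2), of snd] by simp
    have dr: "int (deltaA M r) \<le> d" by (rule SMh_deltaA[OF rdS])
    define t' where "t' = (fst t, snd t + (d - int (deltaA M r)))"
    have "(fst t, snd t) \<in> SMh M" using t(1) by simp
    moreover have "snd t \<le> snd t + (d - int (deltaA M r))" using dr by linarith
    ultimately have t'S: "t' \<in> SMh M" unfolding t'_def by (rule SMh_up[OF M0])
    have eq1: "(mg, int (deltaA_poly M g)) + t' = (r, d)" unfolding t'_def using mgt sndt dg by simp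
    have eq2: "deltaA M (fst (mg, int (deltaA_poly M g))) + deltaA M (fst t') = deltaA M (fst (r, d))"
      unfolding t'_def using t(3) by simp
    have sd: "sdvd_h M (mg, int (deltaA_poly M g)) (r, d)"
      unfolding sdvd_h_def sdeg_single using t'S eq1 eq2 by blast
    show "\<exists>g'\<in>homog M ` G. g' \<noteq> 0 \<and> sdvd_h M (LM ?glt g') (LM ?glt F)"
    proof (rule bexI[of _ "homog M g"])
      show "homog M g \<noteq> 0 \<and> sdvd_h M (LM ?glt (homog M g)) (LM ?glt F)"
        unfolding LMhg rd using hg0 sd by blast
      show "homog M g \<in> homog M ` G" using g(1) by (rule imageI)
    qed
  qed
  have KeqJ: "?K = ?J" using KJ JK by (rule subset_antisym)
  show ?thesis unfolding sparse_GB_def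
  proof (intro conjI)
    show "homog M ` G \<subseteq> ?J" by (rule GJ)
    show "?K = ?J" by (rule KeqJ)
    show "\<forall>f\<in>?J. f \<noteq> 0 \<longrightarrow> (\<exists>g\<in>homog M ` G. g \<noteq> 0 \<and> sdvd_h M (LM ?glt g) (LM ?glt f))"
      by (rule div)
  qed
qed

end
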